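(* Let $d\geq 1$. The moduli orders $r_{PP}$, $r_{PN}$, $r_{NP}$, $r_{NN}$ of length $d$ are rigid. More precisely, let $Q$ be a hyperbolic polynomial of degree $d$ with positive leading coefficient, all coefficients nonzero and roots of pairwise distinct moduli. - If $Q$ defines $r_{PN}$ (when $d$ is even) or $r_{NN}$ (when $d$ is odd), then $Q$ defines the sign pattern $\Sigma_+$ of length $d+1$. - If $Q$ defines $r_{NP}$ (when $d$ is even) or $r_{PP}$ (when $d$ is odd), then $Q$ defines the sign pattern $\Sigma_-$ of length $d+1$.
   Context: A hyperbolic polynomial (HP) is a real univariate polynomial all of whose roots are real. The sign pattern (SP) defined by a polynomial $a_dx^d+\dots+a_0$ with $a_d>0$ and all $a_j\neq0$ is $(\mathrm{sgn}(a_d),\mathrm{sgn}(a_{d-1}),\dots,\mathrm{sgn}(a_0))$. A moduli order (MO) of length $d$ is a string of $d$ letters $P$/$N$ separated by $<$. A HP defines the MO obtained by listing the moduli of its roots in increasing order, writing $P$ for a positive root and $N$ for a negative root. A MO is rigid if all HPs (with positive leading coefficient, nonzero coefficients, roots of distinct moduli) defining it define the same SP. The alternating MOs are: $r_{PN}: P<N<P<N<\dots<N$; $r_{PP}: P<N<\dots<P$; $r_{NP}: N<P<\dots<P$; $r_{NN}: N<P<\dots<N$. In each, letters alternate, and the first and last letters are given by the subscripts. The sign pattern $\Sigma_+$ of length $d+1$ is $(+,+,-,-,+,+,-,-,\dots)$. Its entry in position $k$ (for $k=0,\dots,d$, i.e. the sign of the coefficient of $x^{d-k}$) is $+$ if $k\equiv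 0,1 \pmod 4$ and $-$ if $k\equiv 2,3\pmod 4$. The sign pattern $\Sigma_-$ of length $d+1$ is $(+,-,-,+,+,-,-,+,\dots)$. Its entry in position $k$ is $+$ if $k\equiv 0,3\pmod 4$ and $-$ if $k\equiv 1,2\pmod 4$. *)

theory Defs
  imports "HOL-Computational_Algebra.Polynomial"
begin

definition hyperbolic :: "real poly \<Rightarrow> bool" where
  "hyperbolic p \<longleftrightarrow> (\<forall>z::complex. poly (map_poly of_real p) z = 0 \<longrightarrow> z \<in> \<real>)"

definition all_coeffs_nonzero :: "real poly \<Rightarrow> bool" where
  "all_coeffs_nonzero p \<longleftrightarrow> (\<forall>i\<le>degree p. coeff p i \<noteq> 0)"

text \<open>Roots (counted with multiplicity) have pairwise distinct moduli:
  every root is simple, and distinct roots have distinct absolute values.\<close>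
definition distinct_moduli_roots :: "real poly \<Rightarrow> bool" where
  "distinct_moduli_roots p \<longleftrightarrow> p \<noteq> 0 \<and>
     (\<forall>x. poly p x = 0 \<longrightarrow> order x p = 1) \<and>
     (\<forall>x y. poly p x = 0 \<longrightarrow> poly p y = 0 \<longrightarrow> x \<noteq> y \<longrightarrow> \<bar>x\<bar> \<noteq> \<bar>y\<bar>)"

text \<open>Moduli order as a list of letters: True = P (positive root), False = N (negative root),
  listed by increasing modulus of the (real) roots.\<close>
definition moduli_order :: "real poly \<Rightarrow> bool list" where
  "moduli_order p = map (\<lambda>x. x > 0) (sort_key abs (sorted_list_of_set {x. poly p x = 0}))"

definition alt_MO :: "bool \<Rightarrow> nat \<Rightarrow> bool list" where
  "alt_MO first d = map (\<lambda>i. if even i then first else \<not> first) [0..<d]"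

definition r_PN :: "nat \<Rightarrow> bool list" where "r_PN d = alt_MO True d"
definition r_PP :: "nat \<Rightarrow> bool list" where "r_PP d = alt_MO True d"
definition r_NP :: "nat \<Rightarrow> bool list" where "r_NP d = alt_MO False d"
definition r_NN :: "nat \<Rightarrow> bool list" where "r_NN d = alt_MO False d"

definition sign_pattern :: "real poly \<Rightarrow> real list" where
  "sign_pattern p = map (\<lambda>k. sgn (coeff p (degree p - k))) [0..<degree p + 1]"

definition Sigma_plus :: "nat \<Rightarrow> real list" where
  "Sigma_plus d = map (\<lambda>k. if k mod 4 = 0 \<or> k mod 4 = 1 then 1 else -1) [0..<d + 1]"

definition Sigma_minus :: "nat \<Rightarrow> real list" where
  "Sigma_minus d = map (\<lambda>k. if k mod 4 = 0 \<or> k mod 4 = 3 then 1 else -1) [0..<d + 1]"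

end

theory Submission
  imports Defs
begin

definition wsg :: "real \<Rightarrow> nat \<Rightarrow> real" where
  "wsg e k = (-e)^k * (-1)^(k*(k-1) div 2)"

lemma T_suc: "Suc k * (Suc k - 1) div 2 = k*(k-1) div 2 + k"
proof (cases k)
  case 0 then show ?thesis by simp
next
  case (Suc j)
  have "Suc (Suc j) * Suc j = Suc j * j + 2 * Suc j" by (simp add: algebra_simps)
  then show ?thesis using Suc by simp
qed

lemma wsg_0[simp]: "wsg e 0 = 1" by (simp add: wsg_def)

lemma wsg_shift: "wsg (-e) (Suc k) = e * wsg e k"
proof -
  have "wsg (-e) (Suc k) = e^(Suc k) * (-1)^(k*(k-1) div 2 + k)"
    unfolding wsg_def using T_suc[of k] by simp
  also have "\<dots> = e * ((-e)^k * (-1)^(k*(k-1) div 2))"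
    by (simp add: power_add power_minus' algebra_simps)
  finally show ?thesis by (simp add: wsg_def)
qed

lemma wsg_neg: "wsg (-e) k = (-1)^k * wsg e k"
  unfolding wsg_def by (simp add: power_minus')

lemma coeff_lin: fixes P :: "real poly" shows "coeff (P * [:-t,1:]) n = (if n = 0 then 0 else coeff P (n-1)) - t * coeff P n"
  proof (cases n)
  case 0 then show ?thesis by simp
next
  case (Suc k) then show ?thesis by (simp add: coeff_pCons algebra_simps)
qed

lemma step:
  fixes P :: "real poly" and e M A t :: real and m :: nat
  assumes e: "e*e = 1" and deg: "degree P = m"
    and pos: "\<forall>k\<le>m. wsg e k * coeff P (m-k) > 0"
    and bnd: "\<forall>k\<le>m. odd k \<longrightarrow> wsg e k * coeff P (m-k) \<le> M * (wsg e (k-1) * coeff P (m-(k-1)))"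
    and M: "0 \<le> M" "M < A" and t: "t = -e*A"
  shows "degree (P * [:-t,1:]) = Suc m \<and>
     (\<forall>k\<le>Suc m. wsg (-e) k * coeff (P*[:-t,1:]) (Suc m - k) > 0) \<and>
     (\<forall>k\<le>Suc m. odd k \<longrightarrow> wsg (-e) k * coeff (P*[:-t,1:]) (Suc m - k)
        \<le> A * (wsg (-e) (k-1) * coeff (P*[:-t,1:]) (Suc m-(k-1))))"
proof -
  define P' where "P' = P * [:-t,1:]"
  define B where "B k = (if k \<le> m then wsg e k * coeff P (m-k) else 0)" for k
  have P0: "P \<noteq> 0" using pos by (metis diff_zero le0 coeff_0 mult_zero_right less_irrefl)
  have degP': "degree P' = Suc m" unfolding P'_def using P0 deg
    by (subst degree_mult_eq) auto
  have Bpos: "B k > 0" if "k \<le> m" for k using pos that by (simp add: B_def)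
  have Bnn: "B k \<ge> 0" for k using pos by (simp add: B_def less_imp_le)
  have Bbnd: "B k \<le> M * B (k-1)" if "k \<le> m" "odd k" for k
    using bnd that by (auto simp: B_def)
  have F0: "wsg (-e) 0 * coeff P' (Suc m) = B 0"
    unfolding P'_def coeff_lin using deg by (simp add: B_def coeff_eq_0)
  have F: "wsg (-e) (Suc j) * coeff P' (m - j) = (-1)^(Suc j) * B (Suc j) + A * B j"
    if "j \<le> m" for j
  proof (cases "j = m")
    case True
    have "wsg (-e) (Suc j) * coeff P' (m - j) = e * wsg e m * (- t * coeff P 0)"
      unfolding P'_def coeff_lin using True by (simp add: wsg_shift)
    also have "\<dots> = A * (e*e) * (wsg e m * coeff P 0)" using t by (simp add: algebra_simps)
    finally show ?thesis using True e by (simp add: B_def)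
  next
    case False
    then have j: "j < m" using that by simp
    have "wsg (-e) (Suc j) * coeff P' (m - j)
       = wsg (-e) (Suc j) * coeff P (m - Suc j) - t * (e * wsg e j) * coeff P (m-j)"
      unfolding P'_def coeff_lin using j by (simp add: wsg_shift algebra_simps)
    also have "\<dots> = (-1)^(Suc j) * (wsg e (Suc j) * coeff P (m - Suc j)) + A * (e*e) * (wsg e j * coeff P (m-j))"
      using t by (simp only: wsg_neg) (simp add: algebra_simps)
    finally show ?thesis using j e by (simp add: B_def)
  qed
  have Apos: "A > 0" using M by simp
  have G: "wsg (-e) k * coeff P' (Suc m - k) > 0" if "k \<le> Suc m" for k
  proof (cases k)
    case 0 then show ?thesis using F0 Bpos by simp
  next
    case (Suc j)
    then have jm: "j \<le> m" using that by simp
    have eq: "wsg (-e) k * coeff P' (Suc m - k) = (-1)^(Suc j)*B(Suc j) + A*B j"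
      using F[OF jm] Suc by simp
    show ?thesis
    proof (cases "even j")
      case True
      have "B (Suc j) < A * B j"
      proof (cases "Suc j \<le> m")
        case True
        then have "B (Suc j) \<le> M * B j" using Bbnd[of "Suc j"] \<open>even j\<close> by simp
        also have "\<dots> < A * B j" using Bpos[OF jm] M by simp
        finally show ?thesis .
      next
        case False then show ?thesis using Bpos[OF jm] Apos by (simp add: B_def)
      qed
      then show ?thesis unfolding eq using True by simp
    next
      case False
      then show ?thesis unfolding eq using Bpos[OF jm] Bnn[of "Suc j"] Apos
        by (simp add: add_nonneg_pos)
    qed
  qed
  have H: "wsg (-e) k * coeff P' (Suc m - k) \<le> A * (wsg (-e) (k-1) * coeff P' (Suc m - (k-1)))"
    if "k \<le> Suc m" "odd k" for k
  proof -
    obtain j where k: "k = Suc j" using \<open>odd k\<close> by (cases k) auto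
    have jm: "j \<le> m" using that k by simp
    have ej: "even j" using that k by simp
    have "wsg (-e) k * coeff P' (Suc m - k) = A * B j - B (Suc j)"
      using F[OF jm] k ej by simp
    also have "\<dots> \<le> A * B j" using Bnn by simp
    also have "B j \<le> wsg (-e) j * coeff P' (Suc m - j)"
    proof (cases j)
      case 0 then show ?thesis using F0 by simp
    next
      case (Suc i)
      have im: "i \<le> m" using Suc jm by simp
      have "wsg (-e) j * coeff P' (Suc m - j) = B j + A * B i"
        using F[OF im] Suc ej by simp
      then show ?thesis using Bnn[of i] Apos by simp
    qed
    then have "A * B j \<le> A * (wsg (-e) j * coeff P' (Suc m - j))" using Apos by simp
    finally show ?thesis using k by simp
  qed
  show ?thesis using degP' G H unfolding P'_def by blast
qed

definition PL :: "real list \<Rightarrow> real poly" where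
  "PL ts = prod_list (map (\<lambda>t. [:-t,1:]) ts)"

lemma PL_snoc: "PL (ts @ [t]) = PL ts * [:-t,1:]"
  by (simp add: PL_def)

lemma PL_Cons: "PL (t # ts) = [:-t,1:] * PL ts"
  by (simp add: PL_def)

definition alt_ok :: "real list \<Rightarrow> bool" where
  "alt_ok ts \<longleftrightarrow> sorted_wrt (\<lambda>x y. \<bar>x\<bar> < \<bar>y\<bar>) ts \<and>
     (\<forall>i. Suc i < length ts \<longrightarrow> ((ts!i > 0) \<longleftrightarrow> \<not> (ts!Suc i > 0))) \<and> 0 \<notin> set ts"

lemma key:
  "ts \<noteq> [] \<Longrightarrow> alt_ok ts \<Longrightarrow>
    degree (PL ts) = length ts \<and>
    (\<forall>k\<le>length ts. wsg (sgn (last ts)) k * coeff (PL ts) (length ts - k) > 0) \<and>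
    (\<forall>k\<le>length ts. odd k \<longrightarrow> wsg (sgn (last ts)) k * coeff (PL ts) (length ts - k)
        \<le> \<bar>last ts\<bar> * (wsg (sgn (last ts)) (k-1) * coeff (PL ts) (length ts - (k-1))))"
proof (induction ts rule: rev_induct)
  case Nil then show ?case by simp
next
  case (snoc t ts)
  have t0: "t \<noteq> 0" using snoc.prems by (simp add: alt_ok_def)
  have tsgn: "t = - (- sgn t) * \<bar>t\<bar>" by (simp add: sgn_mult_abs)
  show ?case
  proof (cases "ts = []")
    case True
    have e: "(- sgn t) * (- sgn t) = 1" using t0 by (simp add: sgn_if)
    have "degree (1 * [:-t,1:]) = Suc 0 \<and>
     (\<forall>k\<le>Suc 0. wsg (- (- sgn t)) k * coeff (1*[:-t,1:]) (Suc 0 - k) > 0) \<and>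
     (\<forall>k\<le>Suc 0. odd k \<longrightarrow> wsg (-(- sgn t)) k * coeff (1*[:-t,1:]) (Suc 0 - k)
        \<le> \<bar>t\<bar> * (wsg (-(- sgn t)) (k-1) * coeff (1*[:-t,1:]) (Suc 0-(k-1))))"
      by (rule step[OF e, where M=0]) (use t0 tsgn in auto)
    then show ?thesis using True by (simp add: PL_def)
  next
    case False
    have ok: "alt_ok ts" using snoc.prems unfolding alt_ok_def
      by (auto simp: sorted_wrt_append nth_append)
    note IH = snoc.IH[OF False ok]
    have lt: "\<bar>last ts\<bar> < \<bar>t\<bar>" using snoc.prems False unfolding alt_ok_def
      by (auto simp: sorted_wrt_append)
    have l0: "last ts \<noteq> 0" using ok False unfolding alt_ok_def by (metis last_in_set)
    have alt: "(last ts > 0) \<longleftrightarrow> \<not> (t > 0)"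
    proof -
      have "Suc (length ts - 1) < length (ts @ [t])" using False by simp
      then have "((ts@[t])!(length ts - 1) > 0) \<longleftrightarrow> \<not> ((ts@[t])!Suc (length ts - 1) > 0)"
        using snoc.prems unfolding alt_ok_def by blast
      moreover have "(ts@[t])!(length ts - 1) = last ts" using False
        by (simp add: nth_append last_conv_nth)
      moreover have "(ts@[t])!Suc (length ts - 1) = t" using False by (simp add: nth_append)
      ultimately show ?thesis by simp
    qed
    have st: "sgn t = - sgn (last ts)" using alt t0 l0 by (auto simp: sgn_if)
    have e: "sgn (last ts) * sgn (last ts) = 1" using l0 by (simp add: sgn_if)
    have tt: "t = - sgn (last ts) * \<bar>t\<bar>" using st tsgn by simp
    have "degree (PL ts * [:-t,1:]) = Suc (length ts) \<and>
     (\<forall>k\<le>Suc (length ts). wsg (- sgn (last ts)) k * coeff (PL ts*[:-t,1:]) (Suc (length ts) - k) > 0) \<and>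
     (\<forall>k\<le>Suc (length ts). odd k \<longrightarrow> wsg (- sgn (last ts)) k * coeff (PL ts*[:-t,1:]) (Suc (length ts) - k)
        \<le> \<bar>t\<bar> * (wsg (- sgn (last ts)) (k-1) * coeff (PL ts*[:-t,1:]) (Suc (length ts)-(k-1))))"
      by (rule step[OF e]) (use IH lt tt in auto)
    then show ?thesis using st by (simp add: PL_snoc)
  qed
qed

lemma PL_monic: "degree (PL xs) = length xs \<and> lead_coeff (PL xs) = 1"
proof (induction xs)
  case Nil then show ?case by (simp add: PL_def)
next
  case (Cons x xs)
  have "PL xs \<noteq> 0" using Cons by auto
  have d: "degree ([:-x,1:] * PL xs) = Suc (length xs)"
    using \<open>PL xs \<noteq> 0\<close> Cons.IH by (simp add: degree_mult_eq del: mult_pCons_left)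
  have l1: "lead_coeff (PL xs) = 1" using Cons.IH by blast
  have "lead_coeff ([:-x,1:] * PL xs) = lead_coeff [:-x,1:] * lead_coeff (PL xs)"
    by (rule lead_coeff_mult)
  also have "\<dots> = 1" using l1 by simp
  finally show ?case using d by (simp add: PL_Cons del: mult_pCons_left)
qed

lemma PL_dvd: "distinct xs \<Longrightarrow> \<forall>x\<in>set xs. poly p x = 0 \<Longrightarrow> PL xs dvd p"
proof (induction xs arbitrary: p)
  case Nil then show ?case by (simp add: PL_def)
next
  case (Cons x xs)
  have "[:-x,1:] dvd p" using Cons.prems by (simp add: poly_eq_0_iff_dvd)
  then obtain q where q: "p = [:-x,1:] * q" by (auto elim: dvdE)
  have "\<forall>y\<in>set xs. poly q y = 0"
  proof
    fix y assume y: "y \<in> set xs"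
    then have "poly p y = 0" "y \<noteq> x" using Cons.prems by auto
    then show "poly q y = 0" using q by simp
  qed
  then have "PL xs dvd q" using Cons by simp
  then show ?case using q by (simp add: PL_Cons mult_dvd_mono del: mult_pCons_left)
qed

lemma factor:
  assumes "p \<noteq> 0" "distinct xs" "\<forall>x\<in>set xs. poly p x = 0" "length xs = degree p"
  shows "p = smult (lead_coeff p) (PL xs)"
proof -
  obtain r where r: "p = PL xs * r" using PL_dvd[OF assms(2,3)] by (auto elim: dvdE)
  have r0: "r \<noteq> 0" using r assms(1) by auto
  have P0: "PL xs \<noteq> 0" using PL_monic[of xs] by auto
  have "degree p = length xs + degree r" using r r0 P0 PL_monic[of xs] by (simp add: degree_mult_eq)
  then have "degree r = 0" using assms(4) by simp
  then obtain a where a: "r = [:a:]" by (auto elim: degree_eq_zeroE)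
  have "lead_coeff p = lead_coeff (PL xs) * lead_coeff r" using r by (simp only: lead_coeff_mult)
  moreover have "lead_coeff (PL xs) = 1" using PL_monic[of xs] by blast
  ultimately have la: "lead_coeff p = a" using a by simp
  show ?thesis unfolding la using r a by simp
qed

lemma wsg_m1: "wsg (-1) k = (if k mod 4 = 0 \<or> k mod 4 = 1 then 1 else -1)"
proof (induction k)
  case 0 then show ?case by simp
next
  case (Suc k)
  have "wsg (-1) (Suc k) = (-1)^k * wsg (-1) k"
    using wsg_shift[of 1 k] wsg_neg[of "-1" k] by simp
  also have "\<dots> = (if even k then 1 else -1) * wsg (-1) k" by simp
  moreover have "k mod 4 = 0 \<or> k mod 4 = 1 \<or> k mod 4 = 2 \<or> k mod 4 = 3" by presburger
  moreover have "even k \<longleftrightarrow> (k mod 4 = 0 \<or> k mod 4 = 2)" by presburger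
  moreover have "Suc k mod 4 = (if k mod 4 = 3 then 0 else Suc (k mod 4))" by presburger
  ultimately show ?case using Suc by auto
qed

lemma wsg_p1: "wsg 1 k = (if k mod 4 = 0 \<or> k mod 4 = 3 then 1 else -1)"
proof -
  have "wsg 1 k = wsg (-1) (Suc k)" using wsg_shift[of 1 k] by simp
  moreover have "k mod 4 = 0 \<or> k mod 4 = 1 \<or> k mod 4 = 2 \<or> k mod 4 = 3" by presburger
  moreover have "Suc k mod 4 = (if k mod 4 = 3 then 0 else Suc (k mod 4))" by presburger
  ultimately show ?thesis unfolding wsg_m1 by auto
qed

lemma sgn_from: "w = 1 \<or> w = -1 \<Longrightarrow> (w::real) * c > 0 \<Longrightarrow> sgn c = w"
  by (auto simp: sgn_if)

lemma main_gen:
  fixes Q :: "real poly"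
  assumes d1: "d \<ge> 1" and deg: "degree Q = d" and lc: "lead_coeff Q > 0"
    and nz: "all_coeffs_nonzero Q" and dm: "distinct_moduli_roots Q"
    and mo: "moduli_order Q = alt_MO first d"
  shows "sign_pattern Q = map (wsg (if (if even (d-1) then first else \<not>first) then 1 else -1)) [0..<d+1]"
proof -
  have Q0: "Q \<noteq> 0" using dm by (simp add: distinct_moduli_roots_def)
  define R where "R = {x. poly Q x = 0}"
  have finR: "finite R" using Q0 poly_roots_finite R_def by simp
  define L where "L = sort_key abs (sorted_list_of_set R)"
  have mo': "map (\<lambda>x. x > 0) L = alt_MO first d" using mo by (simp add: moduli_order_def L_def R_def)
  have len: "length L = d" using arg_cong[OF mo', of length] by (simp add: alt_MO_def)
  have lett: "(L!i > 0) = (if even i then first else \<not>first)" if "i < d" for i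
    using arg_cong[OF mo', of "\<lambda>xs. xs!i"] that len by (simp add: alt_MO_def)
  have dist: "distinct L" by (simp add: L_def)
  have setL: "set L = R" using finR by (simp add: L_def)
  have sabs: "sorted (map abs L)" by (simp add: L_def)
  have sw: "sorted_wrt (\<lambda>x y. \<bar>x\<bar> < \<bar>y\<bar>) L"
    unfolding sorted_wrt_iff_nth_less
  proof (intro allI impI)
    fix i j assume ij0: "i < j" "j < length L"
    then have ij: "i < j \<and> j < length L" by simp
    have "\<bar>L!i\<bar> \<le> \<bar>L!j\<bar>" using sabs ij by (auto simp: sorted_iff_nth_mono)
    moreover have "L!i \<noteq> L!j" using dist ij by (simp add: nth_eq_iff_index_eq)
    moreover have "L!i \<in> R" "L!j \<in> R" using ij setL nth_mem by (metis order.strict_trans)+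
    ultimately show "\<bar>L!i\<bar> < \<bar>L!j\<bar>" using dm unfolding distinct_moduli_roots_def R_def by force
  qed
  have z: "0 \<notin> set L"
  proof
    assume "0 \<in> set L"
    then have "poly Q 0 = 0" using setL R_def by auto
    then show False using nz by (simp add: all_coeffs_nonzero_def poly_0_coeff_0)
  qed
  have ok: "alt_ok L" unfolding alt_ok_def using sw z lett len by auto
  have L0: "L \<noteq> []" using len d1 by auto
  have fact: "Q = smult (lead_coeff Q) (PL L)"
    by (rule factor[OF Q0 dist]) (use setL R_def len deg in auto)
  note K = key[OF L0 ok]
  have lastL: "last L = L!(d-1)" using L0 len by (simp add: last_conv_nth)
  define e where "e = sgn (last L)"
  have l0: "last L \<noteq> 0" using z L0 by (metis last_in_set)
  have eq: "e = (if (if even (d-1) then first else \<not>first) then 1 else -1)"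
    using lett[of "d-1"] d1 l0 unfolding e_def lastL by (auto simp: sgn_if)
  have w: "wsg e k = 1 \<or> wsg e k = -1" for k
    using wsg_m1[of k] wsg_p1[of k] unfolding eq by (auto split: if_splits)
  have S: "sgn (coeff Q (d-k)) = wsg e k" if "k < d+1" for k
  proof -
    have "sgn (coeff Q (d-k)) = sgn (coeff (PL L) (d-k))"
      using lc by (subst fact) (simp add: sgn_mult)
    also have "\<dots> = wsg e k" using K that len w by (intro sgn_from) (auto simp: e_def)
    finally show ?thesis .
  qed
  show ?thesis unfolding sign_pattern_def deg eq[symmetric]
    by (intro map_cong refl) (metis S atLeastLessThan_iff set_upt)
qed

theorem theorem1p6:
  fixes Q :: "real poly" and d :: nat
  assumes "d \<ge> 1"
    and "degree Q = d"
    and "lead_coeff Q > 0"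
    and "all_coeffs_nonzero Q"
    and "hyperbolic Q"
    and "distinct_moduli_roots Q"
  shows "((even d \<and> moduli_order Q = r_PN d) \<or> (odd d \<and> moduli_order Q = r_NN d)
            \<longrightarrow> sign_pattern Q = Sigma_plus d)
       \<and> ((even d \<and> moduli_order Q = r_NP d) \<or> (odd d \<and> moduli_order Q = r_PP d)
            \<longrightarrow> sign_pattern Q = Sigma_minus d)"
proof -
  note G = main_gen[OF assms(1,2,3,4,6)]
  have SP: "Sigma_plus d = map (wsg (-1)) [0..<d+1]"
    unfolding Sigma_plus_def wsg_m1 by simp
  have SM: "Sigma_minus d = map (wsg 1) [0..<d+1]"
    unfolding Sigma_minus_def wsg_p1 by simp
  have e1: "even (d-1) \<longleftrightarrow> odd d" using assms(1) by (cases d) auto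
  show ?thesis
    unfolding r_PN_def r_NN_def r_NP_def r_PP_def SP SM
    using G[of True] G[of False] e1 by auto
qed

end
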